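(* Let $r\ge 2$ and $n\ge 4$. For any vertex $(x,y)$ of $\mathcal{D}_{n-1}$ we have $$\pi_n\big(rx+(r-1)y\big)=\pi_{n-1}(x+y),$$ where $\pi_n$ and $\pi_{n-1}$ are as defined in the context.
   Context: Fix an integer $r\ge 2$. Define $c_1=0$, $c_2=1$, $c_n=rc_{n-1}-c_{n-2}$ for $n\ge 3$. For nonnegative integers $a,b$, the maximal Dyck path $\mathcal{P}(a,b)$ is the lattice path from $(0,0)$ to $(a,b)$ using unit north and east steps that never passes strictly above the line segment from $(0,0)$ to $(a,b)$ and is closest to that segment. For $n\ge 3$ let $\mathcal{D}_n=\mathcal{P}(c_{n-1}-c_{n-2},c_{n-2})$; it has $c_{n-1}$ steps, and its vertices are $w_0=(0,0),w_1,\dots,w_{c_{n-1}}$ in order, where $w_i$ is the endpoint of the first $i$ steps (so $w_i=(x,i-x)$ for some $x$). For $n\ge 3$ define $\pi_n:\{0,1,\dots,c_{n-1}\}\to\mathbb{Z}$ by $\pi_n(i)=xc_{n-2}-(i-x)(c_{n-1}-c_{n-2})$, where $w_i=(x,i-x)$ is the $i$-th vertex of $\mathcal{D}_n$. *)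

theory Defs
  imports Main
begin

text \<open>The sequence c: c_1 = 0, c_2 = 1, c_n = r c_{n-1} - c_{n-2} for n >= 3.
  The value at index 0 is never used; it is set to -1, consistent with the recurrence.\<close>
fun cseq :: "nat \<Rightarrow> nat \<Rightarrow> int" where
  "cseq r 0 = -1"
| "cseq r (Suc 0) = 0"
| "cseq r (Suc (Suc 0)) = 1"
| "cseq r (Suc (Suc (Suc n))) = int r * cseq r (Suc (Suc n)) - cseq r (Suc n)"

text \<open>A lattice path from (0,0) to (a,b) with unit east/north steps, given by its
  vertex sequence w 0, ..., w (a+b), which never passes strictly above the segment
  from (0,0) to (a,b) (i.e. every vertex (x,y) satisfies y * a <= b * x).\<close>
definition below_path :: "nat \<Rightarrow> nat \<Rightarrow> (nat \<Rightarrow> nat \<times> nat) \<Rightarrow> bool" where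
  "below_path a b w \<longleftrightarrow>
     w 0 = (0, 0) \<and> w (a + b) = (a, b) \<and>
     (\<forall>i < a + b. w (Suc i) = (fst (w i) + 1, snd (w i)) \<or> w (Suc i) = (fst (w i), snd (w i) + 1)) \<and>
     (\<forall>i \<le> a + b. snd (w i) * a \<le> b * fst (w i))"

definition is_max_dyck :: "nat \<Rightarrow> nat \<Rightarrow> (nat \<Rightarrow> nat \<times> nat) \<Rightarrow> bool" where
  "is_max_dyck a b w \<longleftrightarrow> below_path a b w \<and>
     (\<forall>w'. below_path a b w' \<longrightarrow> (\<forall>i \<le> a + b. snd (w' i) \<le> snd (w i)))"

definition maxdyck_vertex :: "nat \<Rightarrow> nat \<Rightarrow> nat \<Rightarrow> nat \<times> nat" where
  "maxdyck_vertex a b i = (THE v. \<exists>w. is_max_dyck a b w \<and> w i = v)"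

definition Dvertex :: "nat \<Rightarrow> nat \<Rightarrow> nat \<Rightarrow> nat \<times> nat" where
  "Dvertex r n i = maxdyck_vertex (nat (cseq r (n - 1) - cseq r (n - 2))) (nat (cseq r (n - 2))) i"

definition piD :: "nat \<Rightarrow> nat \<Rightarrow> nat \<Rightarrow> int" where
  "piD r n i = (let x = int (fst (Dvertex r n i)) in
                x * cseq r (n - 2) - (int i - x) * (cseq r (n - 1) - cseq r (n - 2)))"

end

theory Submission
  imports Defs
begin

lemma below_sum:
  assumes "below_path a b w" "i \<le> a + b"
  shows "fst (w i) + snd (w i) = i"
  using assms(2)
proof (induction i)
  case 0
  then show ?case using assms(1) by (simp add: below_path_def)
next
  case (Suc i)
  then have "i < a + b" by simp
  then have "w (Suc i) = (fst (w i) + 1, snd (w i)) \<or> w (Suc i) = (fst (w i), snd (w i) + 1)"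
    using assms(1) by (simp add: below_path_def)
  then show ?case using Suc by auto
qed

lemma below_bound:
  assumes "below_path a b w" "i \<le> a + b" "a + b > 0"
  shows "snd (w i) \<le> i * b div (a + b)"
proof -
  have s: "fst (w i) + snd (w i) = i" using below_sum assms by blast
  have c: "snd (w i) * a \<le> b * fst (w i)" using assms by (simp add: below_path_def)
  have "snd (w i) * (a + b) \<le> i * b"
  proof -
    have "snd (w i) * (a + b) = snd (w i) * a + snd (w i) * b" by (simp add: algebra_simps)
    also have "\<dots> \<le> b * fst (w i) + b * snd (w i)" using c by simp
    also have "\<dots> = i * b" using s by (metis add_mult_distrib2 mult.commute)
    finally show ?thesis .
  qed
  then show ?thesis using assms(3) by (simp add: less_eq_div_iff_mult_less_eq)
qed

lemma fle_gen: "(0::nat) < c \<Longrightarrow> b \<le> c \<Longrightarrow> k * b div c \<le> k"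
proof -
  assume c: "0 < c" "b \<le> c"
  have "k * b div c \<le> k * c div c" by (rule div_le_mono) (simp add: c)
  then show ?thesis using c by simp
qed

definition w0 :: "nat \<Rightarrow> nat \<Rightarrow> nat \<Rightarrow> nat \<times> nat" where
  "w0 a b k = (k - k * b div (a + b), k * b div (a + b))"

lemma w0_below:
  assumes "a + b > 0"
  shows "below_path a b (w0 a b)"
proof -
  let ?f = "\<lambda>k. k * b div (a + b)"
  have fle: "?f k \<le> k" for k using fle_gen[OF assms] by simp
  have mono: "?f k \<le> ?f (Suc k)" for k by (simp add: div_le_mono)
  have step: "?f (Suc k) \<le> ?f k + 1" for k
  proof -
    have "Suc k * b = k * b + b" by simp
    also have "\<dots> \<le> k * b + (a + b)" by simp
    finally have "?f (Suc k) \<le> (k * b + (a + b)) div (a + b)" by (simp add: div_le_mono)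
    also have "\<dots> = ?f k + 1" using assms by (subst div_add_self2) auto
    finally show ?thesis .
  qed
  have A: "w0 a b 0 = (0, 0)" by (simp add: w0_def)
  have B: "w0 a b (a + b) = (a, b)" using assms by (simp add: w0_def)
  have C: "w0 a b (Suc i) = (fst (w0 a b i) + 1, snd (w0 a b i)) \<or>
           w0 a b (Suc i) = (fst (w0 a b i), snd (w0 a b i) + 1)" for i
  proof (cases "?f (Suc i) = ?f i")
    case True
    then show ?thesis using fle[of i] by (simp add: w0_def Suc_diff_le)
  next
    case False
    then have "?f (Suc i) = ?f i + 1" using mono[of i] step[of i] by linarith
    then show ?thesis using fle[of i] by (simp add: w0_def)
  qed
  have D: "snd (w0 a b i) * a \<le> b * fst (w0 a b i)" for i
  proof -
    have e: "?f i * (a + b) \<le> i * b" by (simp add: div_times_less_eq_dividend)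
    have "?f i * a + ?f i * b \<le> b * (i - ?f i) + b * ?f i"
      using e fle[of i] by (simp add: algebra_simps diff_mult_distrib2)
    then show ?thesis by (simp add: w0_def)
  qed
  show ?thesis unfolding below_path_def using A B C D by blast
qed

lemma w0_max:
  assumes "a + b > 0"
  shows "is_max_dyck a b (w0 a b)"
  unfolding is_max_dyck_def using w0_below[OF assms] below_bound[OF _ _ assms]
  by (simp add: w0_def)

lemma max_unique:
  assumes "a + b > 0" "is_max_dyck a b w" "i \<le> a + b"
  shows "w i = w0 a b i"
proof -
  have bw: "below_path a b w" using assms(2) by (simp add: is_max_dyck_def)
  have "snd (w0 a b i) \<le> snd (w i)" using assms(2,3) w0_below[OF assms(1)]
    by (simp add: is_max_dyck_def)
  moreover have "snd (w i) \<le> snd (w0 a b i)" using below_bound[OF bw assms(3,1)]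
    by (simp add: w0_def)
  ultimately have "snd (w i) = snd (w0 a b i)" by simp
  moreover have "fst (w i) + snd (w i) = i" using below_sum[OF bw assms(3)] .
  ultimately show ?thesis by (simp add: w0_def prod_eq_iff)
qed

lemma maxdyck_vertex_eq:
  assumes "a + b > 0" "i \<le> a + b"
  shows "maxdyck_vertex a b i = w0 a b i"
  unfolding maxdyck_vertex_def
proof (rule the_equality)
  show "\<exists>w. is_max_dyck a b w \<and> w i = w0 a b i" using w0_max[OF assms(1)] by blast
next
  fix v assume "\<exists>w. is_max_dyck a b w \<and> w i = v"
  then show "v = w0 a b i" using max_unique[OF assms(1) _ assms(2)] by blast
qed

lemma cseq_mono: "m \<ge> 1 \<Longrightarrow> 0 \<le> cseq r m \<and> cseq r m < cseq r (Suc m)" if "r \<ge> 2"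
proof (induction m rule: less_induct)
  case (less m)
  show ?case
  proof (cases "m = 1")
    case True then show ?thesis by simp
  next
    case False
    then obtain j where k: "m = Suc (Suc j)" using less.prems
      by (metis One_nat_def Suc_le_D not0_implies_Suc)
    have ih: "0 \<le> cseq r (Suc j) \<and> cseq r (Suc j) < cseq r (Suc (Suc j))"
      using less.IH[of "Suc j"] k by simp
    have "cseq r (Suc (Suc (Suc j))) = int r * cseq r (Suc (Suc j)) - cseq r (Suc j)" by simp
    moreover have "int r * cseq r (Suc (Suc j)) \<ge> 2 * cseq r (Suc (Suc j))"
      using that ih by (intro mult_right_mono) auto
    ultimately have "cseq r (Suc (Suc (Suc j))) > cseq r (Suc (Suc j))" using ih by linarith
    then show ?thesis using ih k by simp
  qed
qed

lemma piD_formula: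
  assumes "r \<ge> 2" "m \<ge> 3" "int i \<le> cseq r (m - 1)"
  shows "piD r m i = int i * cseq r (m - 2) mod cseq r (m - 1)"
    and "Dvertex r m i = w0 (nat (cseq r (m - 1) - cseq r (m - 2))) (nat (cseq r (m - 2))) i"
proof -
  have h: "0 \<le> cseq r (m - 2) \<and> cseq r (m - 2) < cseq r (Suc (m - 2))"
    using cseq_mono[OF assms(1), of "m - 2"] assms(2) by simp
  have e: "Suc (m - 2) = m - 1" using assms(2) by simp
  define a where "a = nat (cseq r (m - 1) - cseq r (m - 2))"
  define b where "b = nat (cseq r (m - 2))"
  have ab: "int (a + b) = cseq r (m - 1)" using h e by (simp add: a_def b_def)
  have bi: "int b = cseq r (m - 2)" using h by (simp add: b_def)
  have "int (a + b) > 0" using ab h e by simp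
  then have pos: "a + b > 0" by linarith
  have ile: "i \<le> a + b" using ab assms(3) by simp
  show dv: "Dvertex r m i = w0 a b i"
    unfolding Dvertex_def a_def[symmetric] b_def[symmetric] using maxdyck_vertex_eq[OF pos ile] .
  define f where "f = i * b div (a + b)"
  have fle: "f \<le> i" using fle_gen[OF pos] by (simp add: f_def)
  have fst: "fst (Dvertex r m i) = i - f" by (simp add: dv w0_def f_def)
  have ai: "int a = cseq r (m - 1) - cseq r (m - 2)" using h e by (simp add: a_def)
  have "piD r m i = int (i - f) * int b - (int i - int (i - f)) * int a"
    by (simp only: piD_def Let_def fst bi ai)
  also have "\<dots> = int i * int b - int f * int (a + b)" using fle by (simp add: algebra_simps)
  also have "\<dots> = int (i * b - f * (a + b))"
    by (simp add: f_def div_times_less_eq_dividend of_nat_diff)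
  also have "i * b - f * (a + b) = i * b mod (a + b)" by (simp add: f_def minus_div_mult_eq_mod)
  also have "int (i * b mod (a + b)) = int i * cseq r (m - 2) mod cseq r (m - 1)"
    using ab bi by (metis of_nat_mod of_nat_mult)
  finally show "piD r m i = int i * cseq r (m - 2) mod cseq r (m - 1)" .
qed

theorem mainTheorem2:
  fixes r n x y :: nat
  assumes "r \<ge> 2" and "n \<ge> 4"
    and "\<exists>i. int i \<le> cseq r (n - 2) \<and> Dvertex r (n - 1) i = (x, y)"
  shows "piD r n (r * x + (r - 1) * y) = piD r (n - 1) (x + y)"
proof -
  obtain i where i: "int i \<le> cseq r (n - 2)" "Dvertex r (n - 1) i = (x, y)" using assms(3) by blast
  define k where "k = n - 4"
  have k: "n = Suc (Suc (Suc (Suc k)))" using assms(2) unfolding k_def by arith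
  define C1 where "C1 = cseq r (n - 1)"
  define C2 where "C2 = cseq r (n - 2)"
  define B where "B = cseq r (n - 3)"
  have rec: "C1 = int r * C2 - B" using k by (simp add: C1_def C2_def B_def)
  have h2: "0 \<le> cseq r (Suc (Suc k)) \<and> cseq r (Suc (Suc k)) < cseq r (Suc (Suc (Suc k)))"
    using cseq_mono[OF assms(1), of "Suc (Suc k)"] by simp
  have h1: "0 \<le> cseq r (Suc k) \<and> cseq r (Suc k) < cseq r (Suc (Suc k))"
    using cseq_mono[OF assms(1), of "Suc k"] by simp
  have C2pos: "0 < C2" and C21: "C2 < C1" and B0: "0 \<le> B"
    using h1 h2 k by (auto simp: C1_def C2_def B_def)
  have m1: "n - 1 \<ge> 3" "n - 1 - 1 = n - 2" "n - 1 - 2 = n - 3" using k by auto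
  note F = piD_formula[OF assms(1) m1(1), of i, unfolded m1(2,3)]
  have dv: "Dvertex r (n - 1) i = w0 (nat (C2 - B)) (nat B) i"
    using F(2) i(1) by (simp add: C2_def B_def)
  define f where "f = i * nat B div (nat (C2 - B) + nat B)"
  have "w0 (nat (C2 - B)) (nat B) i = (x, y)" using dv i(2) by simp
  then have xy: "x = i - f" "y = f" unfolding w0_def f_def by auto
  have fle: "f \<le> i" unfolding f_def using C2pos B0 by (intro fle_gen) auto
  have ixy: "x + y = i" using xy fle by simp
  define p where "p = piD r (n - 1) i"
  have pmod: "p = int i * B mod C2" using F(1) i(1) by (simp add: p_def C2_def B_def)
  have fx: "fst (Dvertex r (n - 1) i) = x" using i(2) by simp
  have p1: "p = int x * B - (int i - int x) * (C2 - B)"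
    by (simp only: p_def piD_def Let_def fx m1(2,3) C2_def B_def)
  have "int i - int x = int y" using ixy by linarith
  then have pdef: "p = int x * B - int y * (C2 - B)" using p1 by simp
  have p0: "0 \<le> p" and pC2: "p < C2" using pmod C2pos by simp_all
  define j where "j = r * x + (r - 1) * y"
  have jint: "int j = int r * int x + (int r - 1) * int y" using assms(1) by (simp add: j_def of_nat_diff)
  have key: "int j * C2 = int i * C1 + p"
    unfolding jint pdef rec ixy[symmetric] by (simp add: algebra_simps)
  have jle: "int j \<le> C1"
  proof -
    have "int i * C1 + p \<le> C2 * C1"
    proof (cases "int i = C2")
      case True
      then have "p = 0" using pmod by simp
      then show ?thesis using True by simp
    next
      case False
      then have "int i + 1 \<le> C2" using i(1) C2_def by simp
      then have "(int i + 1) * C1 \<le> C2 * C1" using C21 C2pos by (intro mult_right_mono) auto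
      then show ?thesis using pC2 C21 by (simp add: algebra_simps)
    qed
    then have "int j * C2 \<le> C1 * C2" using key by (simp add: mult.commute)
    then show ?thesis using C2pos by simp
  qed
  have "piD r n j = int j * C2 mod C1"
    using piD_formula(1)[OF assms(1), of n j] k jle by (simp add: C1_def C2_def)
  also have "\<dots> = p" using key p0 pC2 C21 by simp
  finally show ?thesis using ixy by (simp add: j_def p_def)
qed

end
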